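(* Let $(X,r)$ be a finite solution of the YBE. Suppose that for some prime divisor $p$ of $|\mathcal G(X,r)|$, the group $\mathcal G(X,r)$ has an abelian normal Sylow $p$-subgroup. Then $(X,r)$ is retractable, i.e. there exist distinct $x,y\in X$ with $\sigma_x=\sigma_y$.
   Context: A solution of the Yang–Baxter equation (YBE) is a pair $(X,r)$, where $X$ is a non-empty set and $r\colon X\times X\to X\times X$, written $r(x,y)=(\sigma_x(y),\gamma_y(x))$, satisfies: $r^2=\mathrm{id}$; all maps $\sigma_x,\gamma_y\colon X\to X$ are bijections; and $r_{12}r_{23}r_{12}=r_{23}r_{12}r_{23}$ as maps $X^3\to X^3$, where $r_{12}=r\times\mathrm{id}_X$ and $r_{23}=\mathrm{id}_X\times r$. The permutation group of $(X,r)$ is $\mathcal G(X,r)=\langle \sigma_x : x\in X\rangle\le \mathrm{Sym}_X$ (a group under composition). *)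

theory Defs
  imports "HOL-Algebra.Bij" "HOL-Algebra.Generated_Groups" "HOL-Algebra.Coset" "HOL-Computational_Algebra.Primes"
begin

definition ybe_sigma :: "('a \<times> 'a \<Rightarrow> 'a \<times> 'a) \<Rightarrow> 'a \<Rightarrow> 'a \<Rightarrow> 'a" where
  "ybe_sigma r x y = fst (r (x, y))"

definition ybe_gamma :: "('a \<times> 'a \<Rightarrow> 'a \<times> 'a) \<Rightarrow> 'a \<Rightarrow> 'a \<Rightarrow> 'a" where
  "ybe_gamma r y x = snd (r (x, y))"

definition r12 :: "('a \<times> 'a \<Rightarrow> 'a \<times> 'a) \<Rightarrow> 'a \<times> 'a \<times> 'a \<Rightarrow> 'a \<times> 'a \<times> 'a" where
  "r12 r t = (case t of (a, b, c) \<Rightarrow> (fst (r (a, b)), snd (r (a, b)), c))"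

definition r23 :: "('a \<times> 'a \<Rightarrow> 'a \<times> 'a) \<Rightarrow> 'a \<times> 'a \<times> 'a \<Rightarrow> 'a \<times> 'a \<times> 'a" where
  "r23 r t = (case t of (a, b, c) \<Rightarrow> (a, fst (r (b, c)), snd (r (b, c))))"

definition ybe_solution :: "'a set \<Rightarrow> ('a \<times> 'a \<Rightarrow> 'a \<times> 'a) \<Rightarrow> bool" where
  "ybe_solution X r \<longleftrightarrow>
     X \<noteq> {} \<and>
     (\<forall>x\<in>X. \<forall>y\<in>X. fst (r (x, y)) \<in> X \<and> snd (r (x, y)) \<in> X) \<and>
     (\<forall>x\<in>X. \<forall>y\<in>X. r (r (x, y)) = (x, y)) \<and>
     (\<forall>x\<in>X. bij_betw (ybe_sigma r x) X X) \<and>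
     (\<forall>y\<in>X. bij_betw (ybe_gamma r y) X X) \<and>
     (\<forall>a\<in>X. \<forall>b\<in>X. \<forall>c\<in>X.
       r12 r (r23 r (r12 r (a, b, c))) = r23 r (r12 r (r23 r (a, b, c))))"

text \<open>The permutation group G(X,r) = < sigma_x : x in X > inside Sym_X
  (HOL-Algebra's BijGroup, whose elements are bijections of X, extensional outside X).\<close>
definition perm_group :: "'a set \<Rightarrow> ('a \<times> 'a \<Rightarrow> 'a \<times> 'a) \<Rightarrow> ('a \<Rightarrow> 'a) monoid" where
  "perm_group X r = subgroup_generated (BijGroup X) ((\<lambda>x. restrict (ybe_sigma r x) X) ` X)"

definition sylow_subgroup :: "('g, 'b) monoid_scheme \<Rightarrow> nat \<Rightarrow> 'g set \<Rightarrow> bool" where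
  "sylow_subgroup G p P \<longleftrightarrow> subgroup P G \<and> card P = p ^ multiplicity p (order G)"

end

theory Submission
  imports Defs "HOL-Algebra.Multiplicative_Group" "HOL-Algebra.Sylow" "HOL-Algebra.Group_Action" "HOL-Number_Theory.Cong"
begin


lemma (in group) cancel_l: "x \<in> carrier G \<Longrightarrow> y \<in> carrier G \<Longrightarrow> z \<in> carrier G \<Longrightarrow> x \<otimes> y = x \<otimes> z \<Longrightarrow> y = z"
  by (metis Units_eq Units_l_cancel)

lemma (in group) pow_coprime_one:
  assumes "x \<in> carrier G" "x [^] (a::nat) = \<one>" "x [^] (b::nat) = \<one>" "coprime a b"
  shows "x = \<one>"
proof -
  have "ord x dvd a" "ord x dvd b" using assms pow_eq_id by auto
  hence "ord x dvd 1" using assms(4) by (metis coprime_iff_gcd_eq_1 gcd_greatest)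
  hence "x [^] (1::nat) = \<one>" using assms(1) pow_eq_id by blast
  thus ?thesis using assms(1) by simp
qed

lemma (in group) subgroup_pow_card:
  assumes "subgroup H G" "finite H" "y \<in> H"
  shows "y [^] card H = \<one>"
proof -
  interpret K: group "G\<lparr>carrier := H\<rparr>" using assms(1) subgroup.subgroup_is_group is_group by blast
  have "y [^]\<^bsub>G\<lparr>carrier := H\<rparr>\<^esub> order (G\<lparr>carrier := H\<rparr>) = \<one>\<^bsub>G\<lparr>carrier := H\<rparr>\<^esub>"
    using K.pow_order_eq_1 assms(3) by simp
  moreover have "\<And>n. y [^]\<^bsub>G\<lparr>carrier := H\<rparr>\<^esub> (n::nat) = y [^] n" by (simp add: nat_pow_def)
  ultimately show ?thesis by (simp add: order_def)
qed

lemma (in group) cauchy_elem: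
  assumes "finite (carrier G)" "prime q" "q dvd order G"
  shows "\<exists>x\<in>carrier G. x \<noteq> \<one> \<and> x [^] q = \<one>"
proof -
  obtain m where m: "order G = q ^ 1 * m" using assms(3) by auto
  obtain K where K: "subgroup K G" "card K = q ^ 1"
    using sylow_thm[OF assms(2) is_group m assms(1)] by blast
  have fK: "finite K" using K(1) assms(1) subgroup.subset finite_subset by blast
  have "card K \<ge> 2" using K(2) assms(2) prime_ge_2_nat by simp
  hence "\<exists>x\<in>K. x \<noteq> \<one>"
    by (metis One_nat_def card_le_Suc0_iff_eq fK not_less_eq_eq numeral_2_eq_2)
  then obtain x where x: "x \<in> K" "x \<noteq> \<one>" by blast
  have "x [^] card K = \<one>" using subgroup_pow_card[OF K(1) fK x(1)] .
  thus ?thesis using x K subgroup.mem_carrier by fastforce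
qed



locale pbrace =
  fixes G :: "('g, 'z) monoid_scheme" (structure)
    and Ad :: "'g monoid" and lam :: "'g \<Rightarrow> 'g \<Rightarrow> 'g"
  assumes grp: "group G" and finG: "finite (carrier G)"
    and addgrp: "comm_group Ad" and Ad_carrier: "carrier Ad = carrier G" and Ad_one: "one Ad = \<one>"
    and lam_closed: "g \<in> carrier G \<Longrightarrow> h \<in> carrier G \<Longrightarrow> lam g h \<in> carrier G"
    and lam_add: "g \<in> carrier G \<Longrightarrow> h \<in> carrier G \<Longrightarrow> k \<in> carrier G \<Longrightarrow> lam g (h \<otimes>\<^bsub>Ad\<^esub> k) = (lam g h) \<otimes>\<^bsub>Ad\<^esub> (lam g k)"
    and mult_add: "g \<in> carrier G \<Longrightarrow> h \<in> carrier G \<Longrightarrow> g \<otimes> h = g \<otimes>\<^bsub>Ad\<^esub> (lam g h)"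
    and lam_mult: "g \<in> carrier G \<Longrightarrow> h \<in> carrier G \<Longrightarrow> k \<in> carrier G \<Longrightarrow> lam (g \<otimes> h) k = lam g (lam h k)"
    and lam_one: "h \<in> carrier G \<Longrightarrow> lam \<one> h = h"
begin

abbreviation "ad \<equiv> monoid.mult Ad"

sublocale group G by (rule grp)
sublocale A: comm_group Ad by (rule addgrp)

lemmas [simp] = Ad_carrier Ad_one

lemma ad_simps [simp]:
  "x \<in> carrier G \<Longrightarrow> ad \<one> x = x"
  "x \<in> carrier G \<Longrightarrow> ad x \<one> = x"
  "x \<in> carrier G \<Longrightarrow> ad (inv\<^bsub>Ad\<^esub> x) x = \<one>"
  "x \<in> carrier G \<Longrightarrow> ad x (inv\<^bsub>Ad\<^esub> x) = \<one>"
  "x \<in> carrier G \<Longrightarrow> inv\<^bsub>Ad\<^esub> x \<in> carrier G"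
  "x \<in> carrier G \<Longrightarrow> y \<in> carrier G \<Longrightarrow> ad x y \<in> carrier G"
  using A.l_one[of x] A.r_one[of x] A.l_inv[of x] A.r_inv[of x] A.inv_closed[of x] A.m_closed[of x y] by auto

lemma ad_simps2 [simp]: "inv\<^bsub>Ad\<^esub> \<one> = \<one>" "\<one> [^]\<^bsub>Ad\<^esub> (n::nat) = \<one>"
  using A.inv_one A.nat_pow_one by auto

lemma Ad_pow_closed: "x \<in> carrier G \<Longrightarrow> x [^]\<^bsub>Ad\<^esub> (n::nat) \<in> carrier G"
  using A.nat_pow_closed by simp

lemma lam_1: "g \<in> carrier G \<Longrightarrow> lam g \<one> = \<one>"
proof -
  assume g: "g \<in> carrier G"
  have e: "ad \<one> \<one> = \<one>" by simp
  have l: "lam g \<one> \<in> carrier G" using lam_closed g by simp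
  have "ad (lam g \<one>) (lam g \<one>) = lam g (ad \<one> \<one>)" by (rule lam_add[OF g one_closed one_closed, symmetric])
  also have "\<dots> = ad (lam g \<one>) \<one>" using e l by simp
  finally have "ad (lam g \<one>) (lam g \<one>) = ad (lam g \<one>) \<one>" .
  thus ?thesis using A.cancel_l[of "lam g \<one>" "lam g \<one>" \<one>] l by simp
qed

lemma lam_pow: "g \<in> carrier G \<Longrightarrow> x \<in> carrier G \<Longrightarrow> lam g (x [^]\<^bsub>Ad\<^esub> (n::nat)) = (lam g x) [^]\<^bsub>Ad\<^esub> n"
proof (induction n)
  case 0 then show ?case using lam_1 by simp
next
  case (Suc n) then show ?case using lam_add Ad_pow_closed by simp
qed

lemma lam_inv_cancel: "g \<in> carrier G \<Longrightarrow> h \<in> carrier G \<Longrightarrow> lam (inv g) (lam g h) = h"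
  using lam_mult[of "inv g" g h] lam_one by simp

lemma add_sub_lemma:
  assumes "a \<in> carrier G" "b \<in> carrier G" "c \<in> carrier G" "d \<in> carrier G" "ad a b = ad c d"
  shows "ad b (inv\<^bsub>Ad\<^esub> c) = ad d (inv\<^bsub>Ad\<^esub> a)"
proof -
  have ia: "inv\<^bsub>Ad\<^esub> a \<in> carrier G" and ic: "inv\<^bsub>Ad\<^esub> c \<in> carrier G" using assms A.inv_closed by auto
  have "ad b (inv\<^bsub>Ad\<^esub> c) = ad (ad (inv\<^bsub>Ad\<^esub> a) (ad a b)) (inv\<^bsub>Ad\<^esub> c)"
    using assms(1-4) ia by (simp add: A.m_assoc[symmetric])
  also have "\<dots> = ad (ad (inv\<^bsub>Ad\<^esub> a) (ad c d)) (inv\<^bsub>Ad\<^esub> c)" using assms(5) by simp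
  also have "\<dots> = ad (inv\<^bsub>Ad\<^esub> a) (ad (ad d c) (inv\<^bsub>Ad\<^esub> c))"
    using assms(1-4) ia ic A.m_comm[of c d] A.m_assoc[of "inv\<^bsub>Ad\<^esub> a" "ad c d" "inv\<^bsub>Ad\<^esub> c"] by simp
  also have "ad (ad d c) (inv\<^bsub>Ad\<^esub> c) = d"
    using assms(1-4) ia ic A.m_assoc[of d c "inv\<^bsub>Ad\<^esub> c"] by simp
  also have "ad (inv\<^bsub>Ad\<^esub> a) d = ad d (inv\<^bsub>Ad\<^esub> a)"
    using assms(1-4) ia ic A.m_comm[of d "inv\<^bsub>Ad\<^esub> a"] by simp
  finally show ?thesis .
qed

lemma ideal_subgroup:
  assumes S: "subgroup S Ad" and inv: "\<And>g x. g \<in> carrier G \<Longrightarrow> x \<in> S \<Longrightarrow> lam g x \<in> S"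
  shows "subgroup S G"
proof (rule subgroupI)
  show Ssub: "S \<subseteq> carrier G" using subgroup.subset[OF S] by simp
  show "S \<noteq> {}" using subgroup.one_closed[OF S] by auto
  fix g h assume g: "g \<in> S" and h: "h \<in> S"
  have gG: "g \<in> carrier G" using g Ssub by auto
  have hG: "h \<in> carrier G" using h Ssub by auto
  show "g \<otimes> h \<in> S" using mult_add[OF gG hG] inv[OF gG h] subgroup.m_closed[OF S g] by simp
  have "ad g (lam g (inv g)) = \<one>" using mult_add[of g "inv g"] gG by simp
  hence "lam g (inv g) = inv\<^bsub>Ad\<^esub> g"
    using A.inv_equality[of "lam g (inv g)" g] A.m_comm lam_closed gG by (simp add: A.m_comm)
  hence "inv g = lam (inv g) (inv\<^bsub>Ad\<^esub> g)" using lam_inv_cancel[of g "inv g"] gG by simp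
  thus "inv g \<in> S" using inv[of "inv g" "inv\<^bsub>Ad\<^esub> g"] subgroup.m_inv_closed[OF S g] gG by simp
qed

end

lemma coprime_by_primes:
  fixes a b :: nat
  assumes "b \<noteq> 0" "\<And>q. prime q \<Longrightarrow> q dvd a \<Longrightarrow> q dvd b \<Longrightarrow> False"
  shows "coprime a b"
proof (rule ccontr)
  assume "\<not> coprime a b"
  hence "gcd a b \<noteq> 1" by (simp add: coprime_iff_gcd_eq_1)
  moreover have "gcd a b \<noteq> 0" using assms(1) by simp
  ultimately obtain q where "q dvd gcd a b" "prime q" using prime_divisor_exists[of "gcd a b"] by auto
  thus False using assms(2) by auto
qed

locale psetup = pbrace +
  fixes p k m :: nat and P
  assumes p: "prime p" and k: "k > 0" and ordG: "order G = p ^ k * m" and cop: "coprime p m"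
    and Pnorm: "P \<lhd> G" and Pcard: "card P = p ^ k"
    and Pab: "\<forall>a\<in>P. \<forall>b\<in>P. a \<otimes> b = b \<otimes> a"
begin

definition "Tor n = {x \<in> carrier G. x [^]\<^bsub>Ad\<^esub> (n::nat) = \<one>}"
abbreviation "Ap \<equiv> Tor (p ^ k)"
abbreviation "Aq \<equiv> Tor m"

lemma Tor_sub: "Tor n \<subseteq> carrier G" unfolding Tor_def by auto

lemma Tor_subgroup: "subgroup (Tor n) Ad"
proof (rule A.subgroupI)
  show "Tor n \<subseteq> carrier Ad" unfolding Tor_def by auto
  show "Tor n \<noteq> {}" unfolding Tor_def using A.nat_pow_one by auto
  fix x y assume x: "x \<in> Tor n" and y: "y \<in> Tor n"
  have xG: "x \<in> carrier G" and yG: "y \<in> carrier G" using x y Tor_sub by auto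
  show "inv\<^bsub>Ad\<^esub> x \<in> Tor n" using x xG A.nat_pow_inv[of x n] unfolding Tor_def by simp
  show "x \<otimes>\<^bsub>Ad\<^esub> y \<in> Tor n" using x y xG yG A.pow_mult_distrib[of x y n] A.m_comm[of x y]
    unfolding Tor_def by simp
qed

lemma Tor_lam: "g \<in> carrier G \<Longrightarrow> x \<in> Tor n \<Longrightarrow> lam g x \<in> Tor n"
  unfolding Tor_def using lam_pow[of g x n] lam_1 lam_closed by simp

lemma Tor_msubgroup: "subgroup (Tor n) G"
  by (rule ideal_subgroup[OF Tor_subgroup Tor_lam])

lemma finTor: "finite (Tor n)" using finG Tor_sub finite_subset by blast

lemma N_def: "card (carrier G) = p ^ k * m" using ordG by (simp add: order_def)

lemma m_pos: "m > 0" using N_def finG by (metis card_gt_0_iff gr0I mult_0_right one_closed empty_iff)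

lemma pow_N: "x \<in> carrier G \<Longrightarrow> x [^]\<^bsub>Ad\<^esub> (p ^ k * m * j) = \<one>"
proof -
  assume x: "x \<in> carrier G"
  have "x [^]\<^bsub>Ad\<^esub> order Ad = \<one>" using A.pow_order_eq_1[of x] x by simp
  hence "x [^]\<^bsub>Ad\<^esub> (p ^ k * m) = \<one>" using N_def by (simp add: order_def)
  thus ?thesis using A.nat_pow_pow[of x "p^k*m" j] x by simp
qed

lemma Tor_inter: "x \<in> Ap \<Longrightarrow> x \<in> Aq \<Longrightarrow> x = \<one>"
  using A.pow_coprime_one[of x "p^k" m] cop unfolding Tor_def by simp

lemma decomp: "x \<in> carrier G \<Longrightarrow> \<exists>u\<in>Ap. \<exists>v\<in>Aq. x = ad u v"
proof -
  assume x: "x \<in> carrier G"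
  have c1: "coprime m (p ^ k)" using cop by (simp add: coprime_commute)
  obtain t where t: "[m * t = 1] (mod p ^ k)" using cong_solve_coprime_nat[OF c1] by auto
  obtain s where s: "[p ^ k * s = 1] (mod m)" using cong_solve_coprime_nat[of "p^k" m] c1
    by (auto simp: coprime_commute)
  define e where "e = m * t + p ^ k * s"
  have e1: "[e = 1] (mod p ^ k)"
  proof -
    have "[p ^ k * s = 0] (mod p ^ k)" by (simp add: cong_0_iff)
    thus ?thesis using t cong_add[of "m*t" 1 "p^k" "p^k*s" 0] unfolding e_def by simp
  qed
  have e2: "[e = 1] (mod m)"
  proof -
    have "[m * t = 0] (mod m)" by (simp add: cong_0_iff)
    thus ?thesis using s cong_add[of "m*t" 0 m "p^k*s" 1] unfolding e_def by simp
  qed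
  have e3: "[e = 1] (mod p ^ k * m)" using coprime_cong_mult_nat[OF e1 e2] c1 by (simp add: coprime_commute)
  have Ngt: "p ^ k * m > 1"
  proof -
    have "p ^ k \<ge> p" using k prime_ge_1_nat[OF p] by (simp add: self_le_power)
    hence "p ^ k > 1" using prime_gt_1_nat[OF p] by linarith
    moreover have "p ^ k * 1 \<le> p ^ k * m" using m_pos by (intro mult_le_mono2) simp
    ultimately show ?thesis by linarith
  qed
  have "e mod (p ^ k * m) = 1 mod (p ^ k * m)" using e3 unfolding cong_def .
  hence "e mod (p ^ k * m) = 1" using Ngt by (metis mod_less)
  moreover have "e = p ^ k * m * (e div (p ^ k * m)) + e mod (p ^ k * m)" by simp
  ultimately have eq: "e = p ^ k * m * (e div (p ^ k * m)) + 1" by simp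
  have xe: "x [^]\<^bsub>Ad\<^esub> e = x"
  proof -
    have "x [^]\<^bsub>Ad\<^esub> e = x [^]\<^bsub>Ad\<^esub> (p ^ k * m * (e div (p ^ k * m)) + 1)" using eq by metis
    also have "\<dots> = ad (x [^]\<^bsub>Ad\<^esub> (p ^ k * m * (e div (p ^ k * m)))) (x [^]\<^bsub>Ad\<^esub> (1::nat))"
      by (rule A.nat_pow_mult[symmetric]) (use x in simp)
    finally have "x [^]\<^bsub>Ad\<^esub> e = ad (x [^]\<^bsub>Ad\<^esub> (p ^ k * m * (e div (p ^ k * m)))) (x [^]\<^bsub>Ad\<^esub> (1::nat))" .
    thus ?thesis using pow_N x by simp
  qed
  define u where "u = x [^]\<^bsub>Ad\<^esub> (m * t)"
  define v where "v = x [^]\<^bsub>Ad\<^esub> (p ^ k * s)"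
  have "u [^]\<^bsub>Ad\<^esub> (p ^ k) = x [^]\<^bsub>Ad\<^esub> (p ^ k * m * t)"
    unfolding u_def using A.nat_pow_pow[of x "m*t" "p^k"] x by (simp add: ac_simps)
  hence uA: "u \<in> Ap" unfolding Tor_def u_def using pow_N x Ad_pow_closed by simp
  have "v [^]\<^bsub>Ad\<^esub> m = x [^]\<^bsub>Ad\<^esub> (p ^ k * m * s)"
    unfolding v_def using A.nat_pow_pow[of x "p^k*s" m] x by (simp add: ac_simps)
  hence vA: "v \<in> Aq" unfolding Tor_def v_def using pow_N x Ad_pow_closed by simp
  have "ad u v = x [^]\<^bsub>Ad\<^esub> e" unfolding u_def v_def e_def using A.nat_pow_mult[of x] x by simp
  thus ?thesis using uA vA xe by metis
qed


lemma Tor_cauchy: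
  assumes q: "prime q" "q dvd card (Tor n)"
  shows "\<exists>x\<in>Tor n. x \<noteq> \<one> \<and> x [^]\<^bsub>Ad\<^esub> q = \<one>"
proof -
  let ?H = "Ad\<lparr>carrier := Tor n\<rparr>"
  have gH: "group ?H" using subgroup.subgroup_is_group[OF Tor_subgroup A.is_group] .
  have fH: "finite (carrier ?H)" using finTor by simp
  have oH: "q dvd order ?H" using q by (simp add: order_def)
  obtain x where x: "x \<in> carrier ?H" "x \<noteq> \<one>\<^bsub>?H\<^esub>" "x [^]\<^bsub>?H\<^esub> q = \<one>\<^bsub>?H\<^esub>"
    using group.cauchy_elem[OF gH fH q(1) oH] by blast
  have "x [^]\<^bsub>?H\<^esub> q = x [^]\<^bsub>Ad\<^esub> q" by (simp add: nat_pow_def)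
  thus ?thesis using x by auto
qed

lemma Tor_inj: "inj_on (\<lambda>(u, v). ad u v) (Ap \<times> Aq)"
proof (rule inj_onI, clarify)
  fix a b c d assume a: "a \<in> Ap" and b: "b \<in> Aq" and c: "c \<in> Ap" and d: "d \<in> Aq" and e: "ad a b = ad c d"
  have G: "a \<in> carrier G" "b \<in> carrier G" "c \<in> carrier G" "d \<in> carrier G" using a b c d Tor_sub by auto
  have "ad b a = ad c d" using e A.m_comm[of a b] G by simp
  hence eq: "ad a (inv\<^bsub>Ad\<^esub> c) = ad d (inv\<^bsub>Ad\<^esub> b)" using add_sub_lemma[of b a c d] G by simp
  have "ad a (inv\<^bsub>Ad\<^esub> c) \<in> Ap" using subgroup.m_closed[OF Tor_subgroup a subgroup.m_inv_closed[OF Tor_subgroup c]] by simp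
  moreover have "ad d (inv\<^bsub>Ad\<^esub> b) \<in> Aq" using subgroup.m_closed[OF Tor_subgroup d subgroup.m_inv_closed[OF Tor_subgroup b]] by simp
  ultimately have "ad a (inv\<^bsub>Ad\<^esub> c) = \<one>" using eq Tor_inter by metis
  hence ac: "a = c" using A.inv_equality[of a "inv\<^bsub>Ad\<^esub> c"] G A.inv_inv[of c] A.m_comm[of a "inv\<^bsub>Ad\<^esub> c"] by simp
  hence "b = d" using e A.cancel_l[of a b d] G by simp
  thus "a = c \<and> b = d" using ac by simp
qed

lemma Tor_image: "(\<lambda>(u, v). ad u v) ` (Ap \<times> Aq) = carrier G"
proof
  show "(\<lambda>(u, v). ad u v) ` (Ap \<times> Aq) \<subseteq> carrier G" using Tor_sub by (auto intro!: A.m_closed[simplified])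
  show "carrier G \<subseteq> (\<lambda>(u, v). ad u v) ` (Ap \<times> Aq)" using decomp by fastforce
qed

lemma card_prod: "card Ap * card Aq = p ^ k * m"
proof -
  have "card (Ap \<times> Aq) = card (carrier G)" using card_image[OF Tor_inj] Tor_image by simp
  thus ?thesis using N_def card_cartesian_product[of Ap Aq] by simp
qed

lemma Aq_cop: "coprime (card Aq) (p ^ k)"
proof -
  have "\<not> p dvd card Aq"
  proof
    assume "p dvd card Aq"
    then obtain x where x: "x \<in> Aq" "x \<noteq> \<one>" "x [^]\<^bsub>Ad\<^esub> p = \<one>" using Tor_cauchy p by blast
    have xG: "x \<in> carrier G" using x Tor_sub by auto
    have "x [^]\<^bsub>Ad\<^esub> (p ^ k) = (x [^]\<^bsub>Ad\<^esub> p) [^]\<^bsub>Ad\<^esub> (p ^ (k - 1))"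
      using A.nat_pow_pow[of x p "p^(k-1)"] xG k by (simp add: power_eq_if)
    hence "x \<in> Ap" using x xG unfolding Tor_def by simp
    thus False using Tor_inter x by blast
  qed
  thus ?thesis using p by (simp add: prime_imp_coprime coprime_commute)
qed

lemma Ap_cop: "coprime (card Ap) m"
proof (rule coprime_by_primes)
  show "m \<noteq> 0" using m_pos by simp
  fix q assume q: "prime q" "q dvd card Ap" "q dvd m"
  then obtain x where x: "x \<in> Ap" "x \<noteq> \<one>" "x [^]\<^bsub>Ad\<^esub> q = \<one>" using Tor_cauchy by blast
  have xG: "x \<in> carrier G" using x Tor_sub by auto
  obtain j where j: "m = q * j" using q(3) by auto
  have "x [^]\<^bsub>Ad\<^esub> m = (x [^]\<^bsub>Ad\<^esub> q) [^]\<^bsub>Ad\<^esub> j"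
    using A.nat_pow_pow[of x q j] xG j by simp
  hence "x \<in> Aq" using x xG unfolding Tor_def by simp
  thus False using Tor_inter x by blast
qed

lemma card_Ap: "card Ap = p ^ k" and card_Aq: "card Aq = m"
proof -
  have a1: "card Ap dvd p ^ k * m" using card_prod by (metis dvd_triv_left)
  have d1: "card Ap dvd p ^ k"
    using a1 Ap_cop coprime_dvd_mult_left_iff[of "card Ap" m "p^k"] by simp
  have a2: "card Aq dvd m * p ^ k" using card_prod by (metis dvd_triv_right mult.commute)
  have d2: "card Aq dvd m"
    using a2 Aq_cop coprime_dvd_mult_left_iff[of "card Aq" "p^k" m] by simp
  have pk: "p ^ k > 0" using p prime_gt_0_nat by simp
  have l1: "card Ap \<le> p ^ k" using d1 pk by (simp add: dvd_imp_le)
  have l2: "card Aq \<le> m" using d2 m_pos by (simp add: dvd_imp_le)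
  show c1: "card Ap = p ^ k"
  proof (rule ccontr)
    assume "card Ap \<noteq> p ^ k"
    hence lt: "card Ap < p ^ k" using l1 by simp
    have "card Ap * card Aq \<le> card Ap * m" using l2 by (rule mult_le_mono2)
    also have "\<dots> < p ^ k * m" using lt m_pos by simp
    finally show False using card_prod by simp
  qed
  show "card Aq = m" using card_prod pk c1 by (metis mult_cancel_left not_gr0)
qed


lemma sub_pow_closed: "subgroup H G \<Longrightarrow> x \<in> H \<Longrightarrow> x [^] (n::nat) \<in> H"
  by (induction n) (auto simp: subgroup.one_closed subgroup.m_closed)

lemma Psub: "subgroup P G" using normal_imp_subgroup[OF Pnorm] .
lemma finP: "finite P" using Psub finG subgroup.subset finite_subset by blast
lemma PG: "x \<in> P \<Longrightarrow> x \<in> carrier G" using Psub subgroup.subset by blast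

lemma cop2: "coprime (p ^ k) m" using cop by simp

lemma P_Aq: "y \<in> P \<Longrightarrow> y \<in> Aq \<Longrightarrow> y = \<one>"
proof -
  assume y: "y \<in> P" "y \<in> Aq"
  have "y [^] (p ^ k) = \<one>" using subgroup_pow_card[OF Psub finP y(1)] Pcard by simp
  moreover have "y [^] m = \<one>" using subgroup_pow_card[OF Tor_msubgroup finTor y(2)] card_Aq by simp
  ultimately show ?thesis using pow_coprime_one[of y "p^k" m] cop2 PG y(1) by simp
qed

lemma Pmult_inj: "inj_on (\<lambda>(a, w). a \<otimes> w) (P \<times> Aq)"
proof (rule inj_onI, clarify)
  fix a w a' w' assume a: "a \<in> P" and w: "w \<in> Aq" and a': "a' \<in> P" and w': "w' \<in> Aq"
    and e: "a \<otimes> w = a' \<otimes> w'"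
  have G: "a \<in> carrier G" "w \<in> carrier G" "a' \<in> carrier G" "w' \<in> carrier G"
    using a w a' w' PG Tor_sub by auto
  have "inv a' \<otimes> a = w' \<otimes> inv w"
  proof -
    have "inv a' \<otimes> a = inv a' \<otimes> (a \<otimes> w) \<otimes> inv w" using G by (simp add: m_assoc)
    also have "\<dots> = inv a' \<otimes> (a' \<otimes> w') \<otimes> inv w" using e by simp
    also have "\<dots> = w' \<otimes> inv w" using G by (simp add: m_assoc[symmetric])
    finally show ?thesis .
  qed
  moreover have "inv a' \<otimes> a \<in> P" using Psub a a' subgroup.m_closed subgroup.m_inv_closed by metis
  moreover have "w' \<otimes> inv w \<in> Aq" using Tor_msubgroup w w' subgroup.m_closed subgroup.m_inv_closed by metis
  ultimately have "inv a' \<otimes> a = \<one>" using P_Aq by metis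
  hence "inv a = inv a'" using G inv_equality[of "inv a'" a] by simp
  hence "inv (inv a) = inv (inv a')" by simp
  hence aa: "a = a'" using G by simp
  hence "w = w'" using e G cancel_l[of a w w'] by simp
  thus "a = a' \<and> w = w'" using aa by simp
qed

lemma Pmult_image: "(\<lambda>(a, w). a \<otimes> w) ` (P \<times> Aq) = carrier G"
proof -
  have sub: "(\<lambda>(a, w). a \<otimes> w) ` (P \<times> Aq) \<subseteq> carrier G" using PG Tor_sub by auto
  have "card ((\<lambda>(a, w). a \<otimes> w) ` (P \<times> Aq)) = p ^ k * m"
    using card_image[OF Pmult_inj] card_cartesian_product[of P Aq] Pcard card_Aq by simp
  thus ?thesis using card_subset_eq[OF finG sub] N_def by simp
qed

lemma pow_decomp:
  assumes a: "a \<in> P" and w: "w \<in> carrier G"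
  shows "\<exists>a'\<in>P. (a \<otimes> w) [^] (n::nat) = a' \<otimes> w [^] n"
proof (induction n)
  case 0
  have "\<one> \<in> P" using Psub subgroup.one_closed by blast
  moreover have "(a \<otimes> w) [^] (0::nat) = \<one> \<otimes> w [^] (0::nat)" by simp
  ultimately show ?case by blast
next
  case (Suc n)
  then obtain a' where a': "a' \<in> P" "(a \<otimes> w) [^] n = a' \<otimes> w [^] n" by blast
  define b where "b = w [^] n \<otimes> a \<otimes> inv (w [^] n)"
  have bP: "b \<in> P" unfolding b_def using normal_inv_iff Pnorm a w by auto
  have G: "a \<in> carrier G" "a' \<in> carrier G" "b \<in> carrier G" "w [^] n \<in> carrier G"
    using a a' bP PG w by auto
  have "(a \<otimes> w) [^] Suc n = a' \<otimes> w [^] n \<otimes> (a \<otimes> w)" using a' by simp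
  also have "\<dots> = (a' \<otimes> b) \<otimes> w [^] Suc n"
    unfolding b_def using G w by (simp add: m_assoc inv_solve_left)
  finally show ?case using bP a' Psub subgroup.m_closed by metis
qed

lemma Ap_eq_P: "Ap = P"
proof -
  have "Ap \<subseteq> P"
  proof
    fix u assume u: "u \<in> Ap"
    have uG: "u \<in> carrier G" using u Tor_sub by auto
    obtain a w where aw: "a \<in> P" "w \<in> Aq" "u = a \<otimes> w" using Pmult_image uG by force
    have wG: "w \<in> carrier G" using aw Tor_sub by auto
    have u1: "u [^] (p ^ k) = \<one>" using subgroup_pow_card[OF Tor_msubgroup finTor u] card_Ap by simp
    obtain a' where a': "a' \<in> P" "u [^] (p ^ k) = a' \<otimes> w [^] (p ^ k)" using pow_decomp[OF aw(1) wG] aw(3) by blast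
    have "inv (w [^] (p ^ k)) = a'" using a' u1 inv_equality[of a' "w [^] (p^k)"] PG wG by simp
    hence "inv (inv (w [^] (p ^ k))) = inv a'" by simp
    hence "w [^] (p ^ k) = inv a'" using wG by simp
    hence "w [^] (p ^ k) \<in> P" using a'(1) Psub subgroup.m_inv_closed by metis
    moreover have "w [^] (p ^ k) \<in> Aq" using sub_pow_closed[OF Tor_msubgroup aw(2)] .
    ultimately have w1: "w [^] (p ^ k) = \<one>" using P_Aq by blast
    have "w [^] m = \<one>" using subgroup_pow_card[OF Tor_msubgroup finTor aw(2)] card_Aq by simp
    hence "w = \<one>" using w1 pow_coprime_one[of w "p^k" m] cop2 wG by simp
    thus "u \<in> P" using aw PG by simp
  qed
  thus ?thesis using card_subset_eq[OF finP] card_Ap Pcard by simp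
qed


lemma ad_inv_one: "x \<in> carrier G \<Longrightarrow> y \<in> carrier G \<Longrightarrow> ad x (inv\<^bsub>Ad\<^esub> y) = \<one> \<Longrightarrow> x = y"
proof -
  assume x: "x \<in> carrier G" and y: "y \<in> carrier G" and e: "ad x (inv\<^bsub>Ad\<^esub> y) = \<one>"
  have "x = ad (ad x (inv\<^bsub>Ad\<^esub> y)) y" using x y by (simp add: A.m_assoc)
  thus ?thesis using e y by simp
qed

lemma P_triv_Aq: assumes a: "a \<in> P" and v: "v \<in> Aq" shows "lam a v = v"
proof -
  have aG: "a \<in> carrier G" and vG: "v \<in> carrier G" using a v PG Tor_sub by auto
  define a' where "a' = inv v \<otimes> a \<otimes> v"
  have a'P: "a' \<in> P" unfolding a'_def using normal_inv_iff Pnorm a vG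
    by (metis inv_closed inv_inv)
  have a'G: "a' \<in> carrier G" using a'P PG by auto
  have "a \<otimes> v = v \<otimes> a'" unfolding a'_def using aG vG by (simp add: m_assoc[symmetric])
  hence "ad a (lam a v) = ad v (lam v a')" using mult_add aG vG a'G by simp
  hence eq: "ad (lam a v) (inv\<^bsub>Ad\<^esub> v) = ad (lam v a') (inv\<^bsub>Ad\<^esub> a)"
    using add_sub_lemma[of a "lam a v" v "lam v a'"] aG vG a'G lam_closed by simp
  have "ad (lam a v) (inv\<^bsub>Ad\<^esub> v) \<in> Aq"
    using subgroup.m_closed[OF Tor_subgroup Tor_lam[OF aG v] subgroup.m_inv_closed[OF Tor_subgroup v]] by simp
  moreover have "ad (lam v a') (inv\<^bsub>Ad\<^esub> a) \<in> Ap"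
  proof -
    have "a' \<in> Ap" "a \<in> Ap" using a'P a Ap_eq_P by auto
    thus ?thesis using subgroup.m_closed[OF Tor_subgroup Tor_lam[OF vG, of a'] subgroup.m_inv_closed[OF Tor_subgroup, of a]]
      by simp
  qed
  ultimately have "ad (lam a v) (inv\<^bsub>Ad\<^esub> v) = \<one>" using eq Tor_inter by metis
  thus ?thesis using ad_inv_one lam_closed aG vG by simp
qed


lemma lamP: "b \<in> P \<Longrightarrow> x \<in> P \<Longrightarrow> lam b x \<in> P"
  using Tor_lam[of b x "p^k"] Ap_eq_P PG by auto

lemma fixed_point: "\<exists>c\<in>P. c \<noteq> \<one> \<and> (\<forall>b\<in>P. lam b c = c)"
proof (rule ccontr)
  assume H: "\<not> (\<exists>c\<in>P. c \<noteq> \<one> \<and> (\<forall>b\<in>P. lam b c = c))"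
  let ?Pg = "G\<lparr>carrier := P\<rparr>"
  define \<phi> where "\<phi> = (\<lambda>b. restrict (lam b) P)"
  have gPg: "group ?Pg" using subgroup.subgroup_is_group[OF Psub is_group] .
  have invP: "b \<in> P \<Longrightarrow> inv b \<in> P" for b by (rule subgroup.m_inv_closed[OF Psub])
  have bij: "\<phi> b \<in> Bij P" if b: "b \<in> P" for b
  proof -
    have bG: "b \<in> carrier G" using b PG by auto
    have "bij_betw (lam b) P P"
    proof (rule bij_betwI[of "lam b" P P "lam (inv b)"])
      show "lam b \<in> P \<rightarrow> P" using lamP b by auto
      show "lam (inv b) \<in> P \<rightarrow> P" using lamP invP b by auto
      show "lam (inv b) (lam b x) = x" if "x \<in> P" for x using lam_inv_cancel bG that PG by auto
      show "lam b (lam (inv b) y) = y" if "y \<in> P" for y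
        using lam_inv_cancel[of "inv b" y] bG that PG by auto
    qed
    thus ?thesis unfolding \<phi>_def Bij_def by simp
  qed
  have hom: "\<phi> \<in> hom ?Pg (BijGroup P)"
  proof (rule homI)
    show "\<phi> x \<in> carrier (BijGroup P)" if "x \<in> carrier ?Pg" for x using bij that by (simp add: BijGroup_def)
    fix x y assume x: "x \<in> carrier ?Pg" and y: "y \<in> carrier ?Pg"
    have xG: "x \<in> carrier G" and yG: "y \<in> carrier G" using x y PG by auto
    have "\<phi> (x \<otimes> y) = compose P (\<phi> x) (\<phi> y)"
      unfolding \<phi>_def compose_def using lamP y x lam_mult[OF xG yG] PG by (intro restrict_ext) simp
    thus "\<phi> (x \<otimes>\<^bsub>?Pg\<^esub> y) = \<phi> x \<otimes>\<^bsub>BijGroup P\<^esub> \<phi> y"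
      using bij x y by (simp add: BijGroup_def)
  qed
  interpret GA: group_action ?Pg P \<phi>
    by (rule group_action.intro[OF group_hom.intro[OF gPg group_BijGroup group_hom_axioms.intro[OF hom]]])
  have orb: "orbit ?Pg \<phi> x = {lam b x | b. b \<in> P}" if "x \<in> P" for x
    unfolding orbit_def \<phi>_def using that by auto
  have oneP: "\<one> \<in> P" using subgroup.one_closed[OF Psub] by simp
  have orb1: "orbit ?Pg \<phi> \<one> = {\<one>}"
    unfolding orb[OF oneP] using oneP lam_1 PG by (auto intro!: exI[of _ \<one>])
  have pdvd: "p dvd card (orbit ?Pg \<phi> x)" if x: "x \<in> P" "x \<noteq> \<one>" for x
  proof -
    have "card (orbit ?Pg \<phi> x) * card (stabilizer ?Pg \<phi> x) = p ^ k"
      using GA.orbit_stabilizer_theorem[OF x(1)] Pcard by (simp add: order_def)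
    hence "card (orbit ?Pg \<phi> x) dvd p ^ k" by (metis dvd_triv_left)
    then obtain i where i: "i \<le> k" "card (orbit ?Pg \<phi> x) = p ^ i" using divides_primepow_nat[OF p] by blast
    show ?thesis
    proof (cases i)
      case 0
      have "\<one> \<in> P" using Psub subgroup.one_closed by blast
      moreover have "lam \<one> x = x" using lam_one PG x(1) by blast
      ultimately have xin: "x \<in> orbit ?Pg \<phi> x" unfolding orb[OF x(1)] by (metis (mono_tags, lifting) mem_Collect_eq)
      have "card (orbit ?Pg \<phi> x) = 1" using i 0 by simp
      then obtain z where "orbit ?Pg \<phi> x = {z}" using card_1_singletonE by blast
      hence "orbit ?Pg \<phi> x = {x}" using xin by simp
      hence "\<forall>b\<in>P. lam b x = x" using orb[OF x(1)] by auto
      thus ?thesis using H x by blast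
    next
      case (Suc j) thus ?thesis using i by simp
    qed
  qed
  have fin_orbs: "finite (orbits ?Pg P \<phi>)"
  proof -
    have "orbits ?Pg P \<phi> = (\<lambda>x. orbit ?Pg \<phi> x) ` P" unfolding orbits_def by auto
    thus ?thesis using finP by simp
  qed
  have one_orb: "{\<one>} \<in> orbits ?Pg P \<phi>"
    using orb1 Psub subgroup.one_closed unfolding orbits_def by fastforce
  have sum: "(\<Sum>orb\<in>orbits ?Pg P \<phi>. card orb) = p ^ k"
  proof -
    have "(\<Sum>orb\<in>orbits ?Pg P \<phi>. card orb) = (\<Sum>orb\<in>orbits ?Pg P \<phi>. \<Sum>x\<in>orb. (1::nat))"
      by (rule sum.cong) auto
    also have "\<dots> = (\<Sum>x\<in>P. 1)" by (rule GA.disjoint_sum[OF finP])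
    finally show ?thesis using Pcard by simp
  qed
  have "(\<Sum>orb\<in>orbits ?Pg P \<phi>. card orb) = card {\<one>} + (\<Sum>orb\<in>orbits ?Pg P \<phi> - {{\<one>}}. card orb)"
    by (rule sum.remove[OF fin_orbs one_orb])
  moreover have "p dvd (\<Sum>orb\<in>orbits ?Pg P \<phi> - {{\<one>}}. card orb)"
  proof (rule dvd_sum)
    fix orb assume o: "orb \<in> orbits ?Pg P \<phi> - {{\<one>}}"
    then obtain x where x: "x \<in> P" "orb = orbit ?Pg \<phi> x" unfolding orbits_def by auto
    have "x \<noteq> \<one>" using o x orb1 by auto
    thus "p dvd card orb" using pdvd x by simp
  qed
  moreover have "p dvd p ^ k" using k by (simp add: dvd_power)
  ultimately have "p dvd 1 + (\<Sum>orb\<in>orbits ?Pg P \<phi> - {{\<one>}}. card orb)"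
    "p dvd (\<Sum>orb\<in>orbits ?Pg P \<phi> - {{\<one>}}. card orb)" using sum by auto
  hence "p dvd 1" using dvd_add_left_iff by blast
  thus False using p by simp
qed


lemma soc: "\<exists>c\<in>P. c \<noteq> \<one> \<and> (\<forall>g\<in>carrier G. lam c g = g)"
proof -
  obtain c where c: "c \<in> P" "c \<noteq> \<one>" "\<forall>b\<in>P. lam b c = c" using fixed_point by blast
  have cG: "c \<in> carrier G" using c PG by auto
  have onP: "lam c b = b" if b: "b \<in> P" for b
  proof -
    have bG: "b \<in> carrier G" using b PG by auto
    have "ad c (lam c b) = c \<otimes> b" using mult_add cG bG by simp
    also have "\<dots> = b \<otimes> c" using Pab c b by simp
    also have "\<dots> = ad b (lam b c)" using mult_add cG bG by simp
    also have "\<dots> = ad c b" using c b A.m_comm[of b c] cG bG by simp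
    finally show ?thesis using A.cancel_l[of c "lam c b" b] cG bG lam_closed by simp
  qed
  have "lam c g = g" if g: "g \<in> carrier G" for g
  proof -
    obtain u v where uv: "u \<in> Ap" "v \<in> Aq" "g = ad u v" using decomp g by blast
    have uG: "u \<in> carrier G" and vG: "v \<in> carrier G" using uv Tor_sub by auto
    have "lam c g = ad (lam c u) (lam c v)" using uv lam_add cG uG vG by simp
    also have "\<dots> = ad u v" using onP[of u] P_triv_Aq[OF c(1) uv(2)] uv(1) Ap_eq_P by simp
    finally show ?thesis using uv by simp
  qed
  thus ?thesis using c by blast
qed

end


locale ybe_ctx =
  fixes X :: "'a set" and r :: "'a \<times> 'a \<Rightarrow> 'a \<times> 'a"
  assumes finX: "finite X" and sol: "ybe_solution X r"
begin

abbreviation "G \<equiv> perm_group X r"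
abbreviation "B \<equiv> BijGroup X"
definition "sg x = restrict (ybe_sigma r x) X"

lemma grpB: "group B" by (rule group_BijGroup)
lemma grpG: "group G" unfolding perm_group_def using group.group_subgroup_generated[OF grpB] .

lemma carrG_sub: "carrier G \<subseteq> Bij X"
proof -
  have cB: "carrier B = Bij X" by (simp add: BijGroup_def)
  have "carrier G = generate B (carrier B \<inter> (\<lambda>x. restrict (ybe_sigma r x) X) ` X)"
    unfolding perm_group_def by (rule carrier_subgroup_generated)
  also have "\<dots> \<subseteq> carrier B" using group.generate_in_carrier[OF grpB, of "carrier B \<inter> (\<lambda>x. restrict (ybe_sigma r x) X) ` X"] by blast
  finally show ?thesis using cB by simp
qed

lemma multB: "f \<in> Bij X \<Longrightarrow> g \<in> Bij X \<Longrightarrow> f \<otimes>\<^bsub>B\<^esub> g = compose X f g"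
  unfolding BijGroup_def by simp

lemma multG: "g \<in> carrier G \<Longrightarrow> h \<in> carrier G \<Longrightarrow> g \<otimes>\<^bsub>G\<^esub> h = compose X g h"
proof -
  assume "g \<in> carrier G" "h \<in> carrier G"
  hence "g \<in> Bij X" "h \<in> Bij X" using carrG_sub by auto
  moreover have "g \<otimes>\<^bsub>G\<^esub> h = g \<otimes>\<^bsub>B\<^esub> h" unfolding perm_group_def mult_subgroup_generated ..
  ultimately show ?thesis using multB by simp
qed

lemma oneG: "\<one>\<^bsub>G\<^esub> = (\<lambda>x\<in>X. x)"
proof -
  have "\<one>\<^bsub>G\<^esub> = \<one>\<^bsub>B\<^esub>" unfolding perm_group_def one_subgroup_generated ..
  also have "\<dots> = (\<lambda>x\<in>X. x)" unfolding BijGroup_def by simp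
  finally show ?thesis .
qed

lemma finG: "finite (carrier G)"
proof -
  have "Bij X \<subseteq> extensional_funcset X X"
  proof
    fix f assume "f \<in> Bij X"
    thus "f \<in> extensional_funcset X X" using Bij_imp_funcset[of f X] Bij_imp_extensional[of f X] by (simp add: PiE_iff extensional_def Pi_iff)
  qed
  moreover have "finite (extensional_funcset X X)" by (rule finite_PiE[OF finX]) (rule finX)
  ultimately show ?thesis using finite_subset[OF subset_trans[OF carrG_sub]] by metis
qed

lemma app_closed: "g \<in> carrier G \<Longrightarrow> x \<in> X \<Longrightarrow> g x \<in> X"
  using carrG_sub Bij_imp_funcset by blast

lemma app_mult: "g \<in> carrier G \<Longrightarrow> h \<in> carrier G \<Longrightarrow> x \<in> X \<Longrightarrow> (g \<otimes>\<^bsub>G\<^esub> h) x = g (h x)"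
  using multG by (simp add: compose_def)

lemma app_one: "x \<in> X \<Longrightarrow> \<one>\<^bsub>G\<^esub> x = x" using oneG by simp

lemma app_inv1: assumes g: "g \<in> carrier G" and x: "x \<in> X" shows "(inv\<^bsub>G\<^esub> g) (g x) = x"
proof -
  have ig: "inv\<^bsub>G\<^esub> g \<in> carrier G" using group.inv_closed[OF grpG g] .
  have "(inv\<^bsub>G\<^esub> g) (g x) = (inv\<^bsub>G\<^esub> g \<otimes>\<^bsub>G\<^esub> g) x" using app_mult[OF ig g x] by simp
  also have "\<dots> = x" using group.l_inv[OF grpG g] app_one x by simp
  finally show ?thesis .
qed

lemma app_inv2: assumes g: "g \<in> carrier G" and x: "x \<in> X" shows "g ((inv\<^bsub>G\<^esub> g) x) = x"
proof -
  have ig: "inv\<^bsub>G\<^esub> g \<in> carrier G" using group.inv_closed[OF grpG g] .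
  have "g ((inv\<^bsub>G\<^esub> g) x) = (g \<otimes>\<^bsub>G\<^esub> inv\<^bsub>G\<^esub> g) x" using app_mult[OF g ig x] by simp
  also have "\<dots> = x" using group.r_inv[OF grpG g] app_one x by simp
  finally show ?thesis .
qed

lemma G_ext: assumes "g \<in> carrier G" "h \<in> carrier G" "\<And>x. x \<in> X \<Longrightarrow> g x = h x" shows "g = h"
proof (rule extensionalityI[of g X h])
  show "g \<in> extensional X" "h \<in> extensional X" using assms(1,2) carrG_sub Bij_imp_extensional by auto
qed (use assms(3) in auto)

lemma sg_Bij: "x \<in> X \<Longrightarrow> sg x \<in> Bij X"
  using sol unfolding ybe_solution_def sg_def Bij_def by auto

lemma sg_G: assumes x: "x \<in> X" shows "sg x \<in> carrier G"
proof -
  have "sg x \<in> carrier B \<inter> (\<lambda>x. restrict (ybe_sigma r x) X) ` X"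
    using sg_Bij[OF x] x by (auto simp: BijGroup_def sg_def)
  thus ?thesis unfolding perm_group_def carrier_subgroup_generated by (rule generate.incl)
qed

lemma sg_app: "x \<in> X \<Longrightarrow> y \<in> X \<Longrightarrow> sg x y = fst (r (x, y))"
  unfolding sg_def ybe_sigma_def by simp


abbreviation "gm g h \<equiv> g \<otimes>\<^bsub>G\<^esub> h"
abbreviation "gi g \<equiv> inv\<^bsub>G\<^esub> g"
abbreviation "ge \<equiv> \<one>\<^bsub>G\<^esub>"

lemma G_simps [simp]:
  "g \<in> carrier G \<Longrightarrow> h \<in> carrier G \<Longrightarrow> gm g h \<in> carrier G"
  "g \<in> carrier G \<Longrightarrow> gi g \<in> carrier G"
  "ge \<in> carrier G"
  using grpG by (auto intro: group.inv_closed monoid.m_closed group.is_monoid monoid.one_closed)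

lemma G_assoc: "g \<in> carrier G \<Longrightarrow> h \<in> carrier G \<Longrightarrow> k \<in> carrier G \<Longrightarrow> gm (gm g h) k = gm g (gm h k)"
  using grpG group.is_monoid monoid.m_assoc by metis

lemma ybe_id:
  assumes x: "x \<in> X" and y: "y \<in> X"
  shows "gm (sg x) (sg (gi (sg x) y)) = gm (sg y) (sg (gi (sg y) x))"
proof -
  define b where "b = gi (sg x) y"
  have bX: "b \<in> X" unfolding b_def using app_closed sg_G x y by simp
  have sxb: "sg x b = y" unfolding b_def using app_inv2 sg_G x y by simp
  have fxb: "fst (r (x, b)) = y" using sxb sg_app x bX by simp
  define w where "w = snd (r (x, b))"
  have wX: "w \<in> X" unfolding w_def using sol x bX unfolding ybe_solution_def by simp
  have rxb: "r (x, b) = (y, w)" using fxb w_def by (metis prod.collapse)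
  have "r (y, w) = (x, b)" using sol x bX rxb unfolding ybe_solution_def by metis
  hence "sg y w = x" using sg_app y wX by simp
  hence w': "w = gi (sg y) x" using app_inv1[OF sg_G[OF y] wX] by simp
  show ?thesis
  proof (rule G_ext)
    show "gm (sg x) (sg (gi (sg x) y)) \<in> carrier G" "gm (sg y) (sg (gi (sg y) x)) \<in> carrier G"
      using sg_G x y bX wX b_def w' by auto
    fix c assume c: "c \<in> X"
    have ybe: "r12 r (r23 r (r12 r (x, b, c))) = r23 r (r12 r (r23 r (x, b, c)))"
      using sol x bX c unfolding ybe_solution_def by blast
    have "fst (r12 r (r23 r (r12 r (x, b, c)))) = fst (r (y, fst (r (w, c))))"
      using rxb unfolding r12_def r23_def by (simp add: case_prod_beta)
    moreover have "fst (r23 r (r12 r (r23 r (x, b, c)))) = fst (r (x, fst (r (b, c))))"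
      unfolding r12_def r23_def by (simp add: case_prod_beta)
    ultimately have eq: "fst (r (y, fst (r (w, c)))) = fst (r (x, fst (r (b, c))))" using ybe by simp
    have wc: "fst (r (w, c)) \<in> X" and bc: "fst (r (b, c)) \<in> X" using sol wX bX c unfolding ybe_solution_def by auto
    have "gm (sg y) (sg w) c = fst (r (y, fst (r (w, c))))"
      using app_mult[OF sg_G[OF y] sg_G[OF wX] c] sg_app y wX c wc by simp
    moreover have "gm (sg x) (sg b) c = fst (r (x, fst (r (b, c))))"
      using app_mult[OF sg_G[OF x] sg_G[OF bX] c] sg_app x bX c bc by simp
    ultimately show "gm (sg x) (sg (gi (sg x) y)) c = gm (sg y) (sg (gi (sg y) x)) c"
      using eq b_def w' by simp
  qed
qed


definition phi :: "'a list \<Rightarrow> ('a \<Rightarrow> 'a)" where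
  "phi xs = foldl (\<lambda>g y. gm g (sg (gi g y))) ge xs"

lemma phi_Nil [simp]: "phi [] = ge" unfolding phi_def by simp

lemma phi_snoc: "phi (xs @ [y]) = gm (phi xs) (sg (gi (phi xs) y))"
  unfolding phi_def by simp

lemma phi_G: "set xs \<subseteq> X \<Longrightarrow> phi xs \<in> carrier G"
proof (induction xs rule: rev_induct)
  case Nil then show ?case by simp
next
  case (snoc y ys)
  hence "phi ys \<in> carrier G" "y \<in> X" by auto
  hence "gi (phi ys) y \<in> X" using app_closed by simp
  thus ?case using phi_snoc sg_G \<open>phi ys \<in> carrier G\<close> by simp
qed

lemma gi_one: "gi ge = ge" using monoid.inv_one[OF group.is_monoid[OF grpG]] .

lemma G_lone: "g \<in> carrier G \<Longrightarrow> gm ge g = g" using grpG group.is_monoid monoid.l_one by metis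
lemma G_rone: "g \<in> carrier G \<Longrightarrow> gm g ge = g" using grpG group.is_monoid monoid.r_one by metis

lemma phi_single: "x \<in> X \<Longrightarrow> phi [x] = sg x"
  using phi_snoc[of "[]" x] gi_one app_one G_lone sg_G by simp

lemma map_closed: "g \<in> carrier G \<Longrightarrow> set ys \<subseteq> X \<Longrightarrow> set (map g ys) \<subseteq> X"
  using app_closed by auto

lemma cocycle:
  assumes xs: "set xs \<subseteq> X" shows "set ys \<subseteq> X \<Longrightarrow> phi (xs @ map (phi xs) ys) = gm (phi xs) (phi ys)"
proof (induction ys rule: rev_induct)
  case Nil then show ?case using G_rone phi_G xs by simp
next
  case (snoc y ys)
  define g where "g = phi xs"
  define h where "h = phi ys"
  have gG: "g \<in> carrier G" using g_def phi_G xs by simp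
  have hG: "h \<in> carrier G" using h_def phi_G snoc by simp
  have yX: "y \<in> X" using snoc by simp
  have IH: "phi (xs @ map g ys) = gm g h" using snoc g_def h_def by simp
  have "gi (gm g h) (g y) = gi h y"
    using group.inv_mult_group[OF grpG gG hG] app_mult[of "gi h" "gi g" "g y"] app_inv1[OF gG yX] gG hG yX app_closed by simp
  hence "phi (xs @ map g (ys @ [y])) = gm (gm g h) (sg (gi h y))"
    using phi_snoc[of "xs @ map g ys" "g y"] IH by simp
  also have "\<dots> = gm g (gm h (sg (gi h y)))" using G_assoc gG hG sg_G app_closed yX by simp
  also have "\<dots> = gm g (phi (ys @ [y]))" using phi_snoc h_def by simp
  finally show ?case using g_def by simp
qed

lemma phi_app: assumes "set xs \<subseteq> X" "set ys \<subseteq> X"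
  shows "phi (xs @ ys) = gm (phi xs) (phi (map (gi (phi xs)) ys))"
proof -
  have gG: "phi xs \<in> carrier G" using phi_G assms by simp
  have "map (phi xs) (map (gi (phi xs)) ys) = ys" using app_inv2[OF gG] assms(2) by (induction ys) auto
  moreover have "set (map (gi (phi xs)) ys) \<subseteq> X" using map_closed gG assms by simp
  ultimately show ?thesis using cocycle[OF assms(1), of "map (gi (phi xs)) ys"] by simp
qed

lemma phi_two: "x \<in> X \<Longrightarrow> y \<in> X \<Longrightarrow> phi [x, y] = phi [y, x]"
  using phi_snoc[of "[x]" y] phi_snoc[of "[y]" x] phi_single ybe_id by simp

lemma phi_swap:
  assumes "set ws \<subseteq> X" "x \<in> X" "y \<in> X" "set zs \<subseteq> X"
  shows "phi (ws @ [x, y] @ zs) = phi (ws @ [y, x] @ zs)"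
proof -
  define h where "h = gi (phi ws)"
  have hG: "h \<in> carrier G" using h_def phi_G assms by simp
  have hx: "h x \<in> X" "h y \<in> X" using hG assms app_closed by auto
  have Z: "set (map h zs) \<subseteq> X" using map_closed hG assms by simp
  have "phi (ws @ [x, y] @ zs) = gm (phi ws) (phi ([h x, h y] @ map h zs))"
    using phi_app[of ws "[x, y] @ zs"] assms h_def by simp
  also have "phi ([h x, h y] @ map h zs) = gm (phi [h x, h y]) (phi (map (gi (phi [h x, h y])) (map h zs)))"
    using phi_app[of "[h x, h y]" "map h zs"] hx Z by simp
  also have "\<dots> = gm (phi [h y, h x]) (phi (map (gi (phi [h y, h x])) (map h zs)))"
    using phi_two hx by simp
  also have "\<dots> = phi ([h y, h x] @ map h zs)"
    using phi_app[of "[h y, h x]" "map h zs"] hx Z by simp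
  also have "gm (phi ws) \<dots> = phi (ws @ [y, x] @ zs)"
    using phi_app[of ws "[y, x] @ zs"] assms h_def by simp
  finally show ?thesis .
qed

lemma phi_move:
  "set ws \<subseteq> X \<Longrightarrow> set xs \<subseteq> X \<Longrightarrow> x \<in> set xs \<Longrightarrow> phi (ws @ xs) = phi (ws @ x # remove1 x xs)"
proof (induction xs arbitrary: ws)
  case Nil then show ?case by simp
next
  case (Cons y ys)
  show ?case
  proof (cases "y = x")
    case True then show ?thesis by simp
  next
    case False
    hence xys: "x \<in> set ys" using Cons by simp
    have yX: "y \<in> X" and xX: "x \<in> X" and ysX: "set ys \<subseteq> X" using Cons xys by auto
    have rX: "set (remove1 x ys) \<subseteq> X" using ysX set_remove1_subset by fastforce
    have "phi (ws @ y # ys) = phi ((ws @ [y]) @ ys)" by simp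
    also have "\<dots> = phi ((ws @ [y]) @ x # remove1 x ys)" using Cons.IH[of "ws @ [y]"] Cons.prems yX xys ysX by simp
    also have "\<dots> = phi (ws @ [y, x] @ remove1 x ys)" by simp
    also have "\<dots> = phi (ws @ [x, y] @ remove1 x ys)" using phi_swap Cons.prems yX xX rX by simp
    finally show ?thesis using False by simp
  qed
qed

lemma phi_perm:
  "mset xs = mset ys \<Longrightarrow> set ws \<subseteq> X \<Longrightarrow> set xs \<subseteq> X \<Longrightarrow> phi (ws @ xs) = phi (ws @ ys)"
proof (induction ys arbitrary: ws xs)
  case Nil then show ?case by simp
next
  case (Cons y ys)
  have yin: "y \<in> set xs" using Cons.prems(1) by (metis list.set_intros(1) set_mset_mset)
  have rX: "set (remove1 y xs) \<subseteq> X" using Cons.prems(3) set_remove1_subset by fastforce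
  have yX: "y \<in> X" using yin Cons.prems(3) by auto
  have ms: "mset (remove1 y xs) = mset ys" using Cons.prems(1) by simp
  have "phi (ws @ xs) = phi (ws @ y # remove1 y xs)" using phi_move Cons.prems yin by simp
  also have "\<dots> = phi ((ws @ [y]) @ remove1 y xs)" by simp
  also have "\<dots> = phi ((ws @ [y]) @ ys)" using Cons.IH[OF ms, of "ws @ [y]"] Cons.prems yX rX by simp
  finally show ?case by simp
qed

lemma phi_comm: "set xs \<subseteq> X \<Longrightarrow> set ys \<subseteq> X \<Longrightarrow> phi (xs @ ys) = phi (ys @ xs)"
  using phi_perm[of "xs @ ys" "ys @ xs" "[]"] by (simp add: union_commute)


definition "PS = phi ` {xs. set xs \<subseteq> X}"

lemma PS_mult: "a \<in> PS \<Longrightarrow> b \<in> PS \<Longrightarrow> gm a b \<in> PS"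
proof -
  assume "a \<in> PS" "b \<in> PS"
  then obtain xs ys where xs: "set xs \<subseteq> X" "a = phi xs" and ys: "set ys \<subseteq> X" "b = phi ys"
    unfolding PS_def by auto
  have "gm a b = phi (xs @ map (phi xs) ys)" using cocycle[OF xs(1) ys(1)] xs ys by simp
  moreover have "set (xs @ map (phi xs) ys) \<subseteq> X" using xs ys map_closed phi_G by auto
  ultimately show ?thesis unfolding PS_def by blast
qed

lemma PS_one: "ge \<in> PS" unfolding PS_def using phi_Nil by (metis (mono_tags, lifting) empty_set empty_subsetI image_eqI mem_Collect_eq)

lemma PS_sub: "PS \<subseteq> carrier G" unfolding PS_def using phi_G by auto

lemma PS_pow: "a \<in> PS \<Longrightarrow> a [^]\<^bsub>G\<^esub> (n::nat) \<in> PS"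
  by (induction n) (auto simp: PS_one PS_mult)

lemma PS_inv: assumes a: "a \<in> PS" shows "gi a \<in> PS"
proof -
  have aG: "a \<in> carrier G" using a PS_sub by auto
  have "order G > 0" using finG unfolding order_def by (simp add: card_gt_0_iff) (use G_simps in blast)
  then obtain n where n: "order G = Suc n" by (metis gr0_implies_Suc)
  have "a [^]\<^bsub>G\<^esub> (Suc n) = ge" using group.pow_order_eq_1[OF grpG aG] n by simp
  hence "gm (a [^]\<^bsub>G\<^esub> n) a = ge" by simp
  hence "gi a = a [^]\<^bsub>G\<^esub> n" using group.inv_equality[OF grpG] aG grpG group.is_monoid monoid.nat_pow_closed
    by metis
  thus ?thesis using PS_pow a by simp
qed

lemma surj: "carrier G \<subseteq> PS"
proof
  fix g assume "g \<in> carrier G"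
  hence g: "g \<in> generate B (carrier B \<inter> (\<lambda>x. restrict (ybe_sigma r x) X) ` X)"
    unfolding perm_group_def carrier_subgroup_generated by simp
  show "g \<in> PS" using g
  proof (induction rule: generate.induct)
    case one
    have "\<one>\<^bsub>B\<^esub> = ge" unfolding perm_group_def one_subgroup_generated ..
    then show ?case using PS_one by simp
  next
    case (incl h)
    then obtain x where x: "x \<in> X" "h = sg x" unfolding sg_def by auto
    then show ?case using phi_single[OF x(1)] unfolding PS_def by (metis (mono_tags, lifting) empty_subsetI image_eqI insert_subset list.set(1,2) mem_Collect_eq)
  next
    case (inv h)
    then obtain x where x: "x \<in> X" "h = sg x" unfolding sg_def by auto
    have "inv\<^bsub>B\<^esub> h = gi h" unfolding perm_group_def
      using group.inv_subgroup_generated[OF grpB, of h] sg_G x by (simp add: perm_group_def)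
    moreover have "h \<in> PS" using phi_single[OF x(1)] x unfolding PS_def by (metis (mono_tags, lifting) empty_subsetI image_eqI insert_subset list.set(1,2) mem_Collect_eq)
    ultimately show ?case using PS_inv by simp
  next
    case (eng h1 h2)
    have "h1 \<otimes>\<^bsub>B\<^esub> h2 = gm h1 h2" unfolding perm_group_def mult_subgroup_generated ..
    then show ?case using PS_mult eng by simp
  qed
qed

definition "rep g = (SOME xs. set xs \<subseteq> X \<and> phi xs = g)"

lemma rep: assumes "g \<in> carrier G" shows "set (rep g) \<subseteq> X" "phi (rep g) = g"
proof -
  have "\<exists>xs. set xs \<subseteq> X \<and> phi xs = g" using surj assms unfolding PS_def by auto
  hence "set (rep g) \<subseteq> X \<and> phi (rep g) = g" unfolding rep_def by (rule someI_ex)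
  thus "set (rep g) \<subseteq> X" "phi (rep g) = g" by auto
qed


definition "ad g h = phi (rep g @ rep h)"
definition "Ad = \<lparr>carrier = carrier G, monoid.mult = ad, one = ge\<rparr>"
definition "lam g h = phi (map g (rep h))"

lemma phi_cong: "set xs \<subseteq> X \<Longrightarrow> set ys \<subseteq> X \<Longrightarrow> phi xs = phi xs' \<Longrightarrow> set xs' \<subseteq> X \<Longrightarrow> phi (xs @ ys) = phi (xs' @ ys)"
  using phi_app by metis

lemma ad_phi: assumes xs: "set xs \<subseteq> X" and ys: "set ys \<subseteq> X" shows "ad (phi xs) (phi ys) = phi (xs @ ys)"
proof -
  have a: "set (rep (phi xs)) \<subseteq> X" "phi (rep (phi xs)) = phi xs" using rep phi_G xs by auto
  have b: "set (rep (phi ys)) \<subseteq> X" "phi (rep (phi ys)) = phi ys" using rep phi_G ys by auto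
  have "ad (phi xs) (phi ys) = phi (xs @ rep (phi ys))" unfolding ad_def using phi_cong a b xs by metis
  also have "\<dots> = phi (rep (phi ys) @ xs)" using phi_comm b xs by simp
  also have "\<dots> = phi (ys @ xs)" using phi_cong b xs ys by metis
  also have "\<dots> = phi (xs @ ys)" using phi_comm xs ys by simp
  finally show ?thesis .
qed

lemma ad_closed: "g \<in> carrier G \<Longrightarrow> h \<in> carrier G \<Longrightarrow> ad g h \<in> carrier G"
  unfolding ad_def using rep phi_G by simp

lemma lam_phi0: "g \<in> carrier G \<Longrightarrow> set ys \<subseteq> X \<Longrightarrow> gm g (phi ys) = ad g (phi (map g ys))"
proof -
  assume g: "g \<in> carrier G" and ys: "set ys \<subseteq> X"
  have a: "set (rep g) \<subseteq> X" "phi (rep g) = g" using rep g by auto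
  have "gm g (phi ys) = phi (rep g @ map g ys)" using cocycle[OF a(1) ys] a by simp
  also have "\<dots> = ad (phi (rep g)) (phi (map g ys))" using ad_phi[OF a(1) map_closed[OF g ys]] by simp
  also have "\<dots> = ad g (phi (map g ys))" using a by simp
  finally show ?thesis .
qed

lemma mult_add: "g \<in> carrier G \<Longrightarrow> h \<in> carrier G \<Longrightarrow> gm g h = ad g (lam g h)"
  using lam_phi0[of g "rep h"] rep unfolding lam_def by simp

lemma lam_closed: "g \<in> carrier G \<Longrightarrow> h \<in> carrier G \<Longrightarrow> lam g h \<in> carrier G"
  unfolding lam_def using rep phi_G map_closed by simp

lemma Ad_grp: "comm_group Ad"
proof (rule comm_groupI)
  fix x y z assume x: "x \<in> carrier Ad" and y: "y \<in> carrier Ad" and z: "z \<in> carrier Ad"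
  have xG: "x \<in> carrier G" and yG: "y \<in> carrier G" and zG: "z \<in> carrier G" using x y z by (auto simp: Ad_def)
  obtain a b c where a: "set a \<subseteq> X" "x = phi a" and b: "set b \<subseteq> X" "y = phi b" and c: "set c \<subseteq> X" "z = phi c"
    using rep xG yG zG by metis
  show "x \<otimes>\<^bsub>Ad\<^esub> y \<in> carrier Ad" using ad_closed xG yG by (simp add: Ad_def)
  show "x \<otimes>\<^bsub>Ad\<^esub> y \<otimes>\<^bsub>Ad\<^esub> z = x \<otimes>\<^bsub>Ad\<^esub> (y \<otimes>\<^bsub>Ad\<^esub> z)"
    using a b c ad_phi by (simp add: Ad_def)
  show "x \<otimes>\<^bsub>Ad\<^esub> y = y \<otimes>\<^bsub>Ad\<^esub> x" using a b ad_phi phi_comm by (simp add: Ad_def)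
next
  show "\<one>\<^bsub>Ad\<^esub> \<in> carrier Ad" by (simp add: Ad_def)
next
  fix x assume x: "x \<in> carrier Ad"
  have xG: "x \<in> carrier G" using x by (simp add: Ad_def)
  obtain a where a: "set a \<subseteq> X" "x = phi a" using rep xG by metis
  show "\<one>\<^bsub>Ad\<^esub> \<otimes>\<^bsub>Ad\<^esub> x = x" using ad_phi[of "[]" a] a by (simp add: Ad_def)
  have "ad x (lam x (gi x)) = ge" using mult_add[of x "gi x"] xG group.r_inv[OF grpG] by simp
  moreover have "ad x (lam x (gi x)) = ad (lam x (gi x)) x"
    using rep[of x] rep[of "lam x (gi x)"] lam_closed xG ad_phi phi_comm by (metis G_simps(2))
  ultimately show "\<exists>y\<in>carrier Ad. y \<otimes>\<^bsub>Ad\<^esub> x = \<one>\<^bsub>Ad\<^esub>"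
    using lam_closed xG by (auto simp: Ad_def)
qed

lemma lam_phi: assumes g: "g \<in> carrier G" and ys: "set ys \<subseteq> X" shows "lam g (phi ys) = phi (map g ys)"
proof -
  have "ad g (lam g (phi ys)) = ad g (phi (map g ys))"
    using mult_add[OF g phi_G[OF ys]] lam_phi0[OF g ys] by simp
  thus ?thesis using group.cancel_l[OF comm_group.axioms(2)[OF Ad_grp], of g "lam g (phi ys)" "phi (map g ys)"]
    g lam_closed phi_G ys map_closed by (simp add: Ad_def)
qed


lemma lam_add: assumes g: "g \<in> carrier G" and h: "h \<in> carrier G" and k: "k \<in> carrier G"
  shows "lam g (ad h k) = ad (lam g h) (lam g k)"
proof -
  have a: "set (rep h) \<subseteq> X" "phi (rep h) = h" and b: "set (rep k) \<subseteq> X" "phi (rep k) = k" using rep h k by auto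
  have "lam g (ad h k) = lam g (phi (rep h @ rep k))" unfolding ad_def ..
  also have "\<dots> = phi (map g (rep h) @ map g (rep k))" using lam_phi[OF g] a b by simp
  also have "\<dots> = ad (phi (map g (rep h))) (phi (map g (rep k)))"
    using ad_phi map_closed[OF g a(1)] map_closed[OF g b(1)] by simp
  also have "\<dots> = ad (lam g h) (lam g k)" unfolding lam_def ..
  finally show ?thesis .
qed

lemma lam_mult: assumes g: "g \<in> carrier G" and h: "h \<in> carrier G" and k: "k \<in> carrier G"
  shows "lam (gm g h) k = lam g (lam h k)"
proof -
  have a: "set (rep k) \<subseteq> X" using rep k by auto
  have "map (gm g h) (rep k) = map (g \<circ> h) (rep k)" using app_mult[OF g h] a by (intro map_cong) auto
  hence "map (gm g h) (rep k) = map g (map h (rep k))" by simp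
  hence "lam (gm g h) k = phi (map g (map h (rep k)))" unfolding lam_def by (rule arg_cong[where f=phi])
  also have "\<dots> = lam g (phi (map h (rep k)))" using lam_phi[OF g] map_closed[OF h a] by simp
  finally show ?thesis unfolding lam_def .
qed

lemma lam_one: "h \<in> carrier G \<Longrightarrow> lam ge h = h"
proof -
  assume h: "h \<in> carrier G"
  have a: "set (rep h) \<subseteq> X" "phi (rep h) = h" using rep h by auto
  have "map ge (rep h) = rep h" using app_one a(1) by (intro map_idI) auto
  thus ?thesis unfolding lam_def using a by simp
qed

lemma lam_sg: "g \<in> carrier G \<Longrightarrow> x \<in> X \<Longrightarrow> lam g (sg x) = sg (g x)"
  using lam_phi[of g "[x]"] phi_single app_closed by simp

lemma pbrace: "pbrace G Ad lam"
proof (rule pbrace.intro)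
  show "\<And>g h k. g \<in> carrier G \<Longrightarrow> h \<in> carrier G \<Longrightarrow> k \<in> carrier G \<Longrightarrow> lam (gm g h) k = lam g (lam h k)"
    by (rule lam_mult)
qed (auto simp: Ad_def lam_closed lam_add mult_add lam_one grpG finG Ad_grp[unfolded Ad_def])

end

theorem lemma3p5:
  fixes X :: "'a set" and r :: "'a \<times> 'a \<Rightarrow> 'a \<times> 'a" and p :: nat
  assumes "finite X"
    and "ybe_solution X r"
    and "prime p"
    and "p dvd order (perm_group X r)"
    and "\<exists>P. sylow_subgroup (perm_group X r) p P \<and> P \<lhd> perm_group X r
             \<and> (\<forall>a\<in>P. \<forall>b\<in>P. a \<otimes>\<^bsub>perm_group X r\<^esub> b = b \<otimes>\<^bsub>perm_group X r\<^esub> a)"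
  shows "\<exists>x\<in>X. \<exists>y\<in>X. x \<noteq> y \<and> (\<forall>z\<in>X. ybe_sigma r x z = ybe_sigma r y z)"
proof -
  interpret Y: ybe_ctx X r using assms(1,2) by unfold_locales
  obtain P where P: "sylow_subgroup (perm_group X r) p P" "P \<lhd> perm_group X r"
    "\<forall>a\<in>P. \<forall>b\<in>P. a \<otimes>\<^bsub>perm_group X r\<^esub> b = b \<otimes>\<^bsub>perm_group X r\<^esub> a" using assms(5) by blast
  define N where "N = order (perm_group X r)"
  define k where "k = multiplicity p N"
  define m where "m = N div p ^ k"
  have Npos: "N > 0" unfolding N_def order_def using Y.finG Y.G_simps(3) card_gt_0_iff by blast
  have nu: "\<not> is_unit p" using prime_gt_1_nat[OF assms(3)] by simp
  have kpos: "k > 0" unfolding k_def using multiplicity_gt_zero_iff[of N p] assms(4) Npos nu N_def by simp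
  have Nkm: "N = p ^ k * m" unfolding m_def k_def using multiplicity_dvd[of p N] by simp
  have "\<not> p dvd m" unfolding m_def k_def using multiplicity_decompose[of N p] Npos nu by simp
  hence copm: "coprime p m" using assms(3) by (simp add: prime_imp_coprime)
  have cardP: "card P = p ^ k" using P(1) unfolding sylow_subgroup_def k_def N_def by simp
  interpret PS: psetup "perm_group X r" Y.Ad Y.lam p k m P
  proof (intro psetup.intro psetup_axioms.intro)
    show "pbrace (perm_group X r) Y.Ad Y.lam" by (rule Y.pbrace)
  qed (use assms(3) kpos Nkm N_def copm P cardP in auto)
  obtain c where c: "c \<in> P" "c \<noteq> Y.ge" "\<forall>g\<in>carrier (perm_group X r). Y.lam c g = g" using PS.soc by blast
  have cG: "c \<in> carrier (perm_group X r)" using c PS.PG by auto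
  obtain x where x: "x \<in> X" "c x \<noteq> x"
  proof -
    have "\<not> (\<forall>x\<in>X. c x = Y.ge x)" using Y.G_ext[OF cG Y.G_simps(3)] c(2) by blast
    thus ?thesis using that Y.app_one by auto
  qed
  have cx: "c x \<in> X" using Y.app_closed cG x by simp
  have "Y.sg (c x) = Y.sg x" using Y.lam_sg[OF cG x(1)] c(3) Y.sg_G x by simp
  hence "\<forall>z\<in>X. ybe_sigma r (c x) z = ybe_sigma r x z" unfolding Y.sg_def by (metis restrict_apply')
  thus ?thesis using cx x by blast
qed


end
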